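(* Let $(\Omega,\mathcal F,\mathbb P)$ be a probability space with $\Omega$ compact. Let $\mathfrak G$ (option sellers) and $\mathfrak R$ (option buyers) be finite disjoint index sets, and for each $i\in\mathfrak G\cup\mathfrak R$ let $\pi_i^\omega$ (electricity-market profit) and $p_i^{\omega,*}$ (real-time price faced by $i$) be given square-integrable random variables. Fix $\overline q,\overline K,\overline\Delta>0$ and $\mathcal A_0:=[0,\overline q]\times[0,\overline K]\times[0,\overline\Delta]$. Assume every participant is risk-neutral, i.e. its acceptable set is $$\mathcal A_r=\{(q,K,\Delta)\in\mathcal A_0:\ \mathbb E[\pi_r^\omega-q\Delta+(p_r^{\omega,*}-K)^+\Delta]\ge\mathbb E[\pi_r^\omega]\}\quad (r\in\mathfrak R),$$ $$\mathcal A_g=\{(q,K,\Delta)\in\mathcal A_0:\ \mathbb E[\pi_g^\omega+q\Delta-(p_g^{\omega,*}-K)^+\Delta]\ge\mathbb E[\pi_g^\omega]\}\quad (g\in\mathfrak G).$$ Consider the problem of maximizing $\mathbb E[\mathsf{MS}^\omega]$, where $$\mathsf{MS}^\omega:=\sum_{r\in\mathfrak R}q_r\Delta_r-\sum_{g\in\mathfrak G}q_g\Delta_g-\sum_{r\in\mathfrak R}(p_r^{\omega,*}-K_r)^+\Delta_r+\sum_{g\in\mathfrak G}(p_g^{\omega,*}-K_g)^+\delta_g^\omega,$$ over $(q_i,K_i,\Delta_i)\in\mathbb R_+^3$ for all $i\in\mathfrak G\cup\mathfrak R$ and $\mathcal F$-measurable $\delta_g:\Omega\to[0,\Delta_g]$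 in $\mathcal L_2(\Omega)$ for $g\in\mathfrak G$, subject to $\sum_{g}\Delta_g=\sum_r\Delta_r$, $(q_i,K_i,\Delta_i)\in\mathcal A_i$ for all $i$, and, $\mathbb P$-almost surely, $\delta_g^\omega\in[0,\Delta_g]$ for all $g$ and $\sum_{g\in\mathfrak G}\delta_g^\omega=\sum_{r\in\mathfrak R}\Delta_r\mathbf 1\{p_r^{\omega,*}\ge K_r\}$. Then the optimal value of this problem is $0$; that is, $\mathbb E[\mathsf{MS}^{\omega,*}]=0$ at an optimal solution.
   Context: $z^+:=\max\{z,0\}$ and $\mathbf 1\{\cdot\}$ is the indicator of an event. $\mathsf{MS}^\omega$ is the merchandising surplus of a profit-maximizing market maker that buys cash-settled call options (option price $q$, strike $K$, quantity $\Delta$; payoff $(p-K)^+$ per unit at real-time price $p$) from sellers $g$ and sells them to buyers $r$, with $\delta_g^\omega$ the amount of cashable options allocated to seller $g$ in scenario $\omega$. *)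

theory Defs
  imports "HOL-Probability.Probability"
begin

definition sq_int :: "'a measure \<Rightarrow> ('a \<Rightarrow> real) \<Rightarrow> bool" where
  "sq_int M X \<longleftrightarrow> X \<in> borel_measurable M \<and> integrable M (\<lambda>w. (X w)^2)"

definition posp :: "real \<Rightarrow> real" where
  "posp z = max z 0"

definition A0 :: "real \<Rightarrow> real \<Rightarrow> real \<Rightarrow> (real \<times> real \<times> real) set" where
  "A0 qb Kb Db = {0..qb} \<times> {0..Kb} \<times> {0..Db}"

definition acc_buyer ::
  "'a measure \<Rightarrow> real \<Rightarrow> real \<Rightarrow> real \<Rightarrow> ('a \<Rightarrow> real) \<Rightarrow> ('a \<Rightarrow> real) \<Rightarrow> (real \<times> real \<times> real) set" where
  "acc_buyer M qb Kb Db pr p = {(q, K, D) \<in> A0 qb Kb Db.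
     (\<integral>w. pr w - q * D + posp (p w - K) * D \<partial>M) \<ge> (\<integral>w. pr w \<partial>M)}"

definition acc_seller ::
  "'a measure \<Rightarrow> real \<Rightarrow> real \<Rightarrow> real \<Rightarrow> ('a \<Rightarrow> real) \<Rightarrow> ('a \<Rightarrow> real) \<Rightarrow> (real \<times> real \<times> real) set" where
  "acc_seller M qb Kb Db pr p = {(q, K, D) \<in> A0 qb Kb Db.
     (\<integral>w. pr w + q * D - posp (p w - K) * D \<partial>M) \<ge> (\<integral>w. pr w \<partial>M)}"

definition MS ::
  "'i set \<Rightarrow> 'i set \<Rightarrow> ('i \<Rightarrow> 'a \<Rightarrow> real) \<Rightarrow> ('i \<Rightarrow> real) \<Rightarrow> ('i \<Rightarrow> real) \<Rightarrow> ('i \<Rightarrow> real)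
     \<Rightarrow> ('i \<Rightarrow> 'a \<Rightarrow> real) \<Rightarrow> 'a \<Rightarrow> real" where
  "MS G R p q K D \<delta> w =
     (\<Sum>r\<in>R. q r * D r) - (\<Sum>g\<in>G. q g * D g)
     - (\<Sum>r\<in>R. posp (p r w - K r) * D r) + (\<Sum>g\<in>G. posp (p g w - K g) * \<delta> g w)"

definition feasible ::
  "'a measure \<Rightarrow> 'i set \<Rightarrow> 'i set \<Rightarrow> real \<Rightarrow> real \<Rightarrow> real \<Rightarrow> ('i \<Rightarrow> 'a \<Rightarrow> real) \<Rightarrow> ('i \<Rightarrow> 'a \<Rightarrow> real)
     \<Rightarrow> ('i \<Rightarrow> real) \<Rightarrow> ('i \<Rightarrow> real) \<Rightarrow> ('i \<Rightarrow> real) \<Rightarrow> ('i \<Rightarrow> 'a \<Rightarrow> real) \<Rightarrow> bool" where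
  "feasible M G R qb Kb Db pr p q K D \<delta> \<longleftrightarrow>
     (\<forall>i\<in>G \<union> R. q i \<ge> 0 \<and> K i \<ge> 0 \<and> D i \<ge> 0) \<and>
     (\<forall>g\<in>G. sq_int M (\<delta> g) \<and> (\<forall>w\<in>space M. 0 \<le> \<delta> g w \<and> \<delta> g w \<le> D g)) \<and>
     (\<Sum>g\<in>G. D g) = (\<Sum>r\<in>R. D r) \<and>
     (\<forall>r\<in>R. (q r, K r, D r) \<in> acc_buyer M qb Kb Db (pr r) (p r)) \<and>
     (\<forall>g\<in>G. (q g, K g, D g) \<in> acc_seller M qb Kb Db (pr g) (p g)) \<and>
     (AE w in M. (\<forall>g\<in>G. 0 \<le> \<delta> g w \<and> \<delta> g w \<le> D g) \<and>
        (\<Sum>g\<in>G. \<delta> g w) = (\<Sum>r\<in>R. D r * (if p r w \<ge> K r then 1 else 0)))"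

end

theory Submission
  imports Defs
begin

lemma sqint_int:
  assumes "prob_space M" "sq_int M X" shows "integrable M X"
proof -
  interpret prob_space M by fact
  have "X \<in> borel_measurable M" "integrable M (\<lambda>w. (X w)^2)"
    using assms(2) unfolding sq_int_def by auto
  thus ?thesis by (rule square_integrable_imp_integrable)
qed

lemma posp_int:
  assumes "prob_space M" "integrable M X"
  shows "integrable M (\<lambda>w. posp (X w - c))"
proof -
  interpret prob_space M by fact
  have "integrable M (\<lambda>w. max (X w - c) 0)"
    using assms(2) by (intro Bochner_Integration.integrable_max Bochner_Integration.integrable_diff integrable_const) auto
  thus ?thesis unfolding posp_def .
qed

lemma posp_ge0: "posp z \<ge> 0" unfolding posp_def by simp

theorem proposition2:
  fixes M :: "('a::topological_space) measure"
    and G R :: "'i set"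
    and pr p :: "'i \<Rightarrow> 'a \<Rightarrow> real"
    and qb Kb Db :: real
  assumes "prob_space M"
    and "compact (space M)"
    and "finite G" and "finite R" and "G \<inter> R = {}"
    and "\<forall>i\<in>G \<union> R. sq_int M (pr i) \<and> sq_int M (p i)"
    and "qb > 0" and "Kb > 0" and "Db > 0"
  shows "(\<exists>q K D \<delta>. feasible M G R qb Kb Db pr p q K D \<delta> \<and>
            (\<integral>w. MS G R p q K D \<delta> w \<partial>M) = 0)
       \<and> (\<forall>q K D \<delta>. feasible M G R qb Kb Db pr p q K D \<delta> \<longrightarrow>
            (\<integral>w. MS G R p q K D \<delta> w \<partial>M) \<le> 0)"
proof
  interpret P: prob_space M by fact
  have A0: "(0,0,0) \<in> A0 qb Kb Db" using assms unfolding A0_def by auto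
  have sq0: "sq_int M (\<lambda>w. 0)" unfolding sq_int_def by simp
  show "\<exists>q K D \<delta>. feasible M G R qb Kb Db pr p q K D \<delta> \<and>
            (\<integral>w. MS G R p q K D \<delta> w \<partial>M) = 0"
    apply (rule exI[of _ "\<lambda>_. 0"], rule exI[of _ "\<lambda>_. 0"], rule exI[of _ "\<lambda>_. 0"],
        rule exI[of _ "\<lambda>_ _. 0"])
    using A0 sq0 unfolding feasible_def acc_buyer_def acc_seller_def MS_def by simp
next
  interpret P: prob_space M by fact
  show "\<forall>q K D \<delta>. feasible M G R qb Kb Db pr p q K D \<delta> \<longrightarrow>
            (\<integral>w. MS G R p q K D \<delta> w \<partial>M) \<le> 0"
  proof (intro allI impI)
    fix q K D \<delta> assume F: "feasible M G R qb Kb Db pr p q K D \<delta>"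
    define E where "E i = (\<integral>w. posp (p i w - K i) \<partial>M)" for i
    have ipr: "integrable M (pr i)" if "i \<in> G \<union> R" for i
      using sqint_int[OF assms(1)] assms(6) that by blast
    have ip: "integrable M (p i)" if "i \<in> G \<union> R" for i
      using sqint_int[OF assms(1)] assms(6) that by blast
    have ipp: "integrable M (\<lambda>w. posp (p i w - K i))" if "i \<in> G \<union> R" for i
      using posp_int[OF assms(1) ip[OF that]] .
    have dmeas: "\<delta> g \<in> borel_measurable M" if "g \<in> G" for g
      using F that unfolding feasible_def sq_int_def by blast
    have dbd: "\<forall>w\<in>space M. 0 \<le> \<delta> g w \<and> \<delta> g w \<le> D g" if "g \<in> G" for g
      using F that unfolding feasible_def by blast
    have ippd: "integrable M (\<lambda>w. posp (p g w - K g) * \<delta> g w)" if "g \<in> G" for g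
    proof (rule Bochner_Integration.integrable_bound[where f="\<lambda>w. posp (p g w - K g) * D g"])
      show "integrable M (\<lambda>w. posp (p g w - K g) * D g)" using ipp that by auto
      show "(\<lambda>w. posp (p g w - K g) * \<delta> g w) \<in> borel_measurable M"
        using ipp[of g] dmeas[OF that] that by (intro borel_measurable_times) auto
      show "AE x in M. norm (posp (p g x - K g) * \<delta> g x) \<le> norm (posp (p g x - K g) * D g)"
        using dbd[OF that] posp_ge0
        by (intro AE_I2) (auto simp: abs_mult intro!: mult_left_mono)
    qed
    have buy: "q r * D r - E r * D r \<le> 0" if "r \<in> R" for r
    proof -
      have acc: "(\<integral>w. pr r w - q r * D r + posp (p r w - K r) * D r \<partial>M) \<ge> (\<integral>w. pr r w \<partial>M)"
        using F that unfolding feasible_def acc_buyer_def by auto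
      have "(\<integral>w. pr r w - q r * D r + posp (p r w - K r) * D r \<partial>M)
          = (\<integral>w. pr r w \<partial>M) - q r * D r + E r * D r"
        using ipr[of r] ipp[of r] that unfolding E_def
        by (simp add: P.prob_space)
      thus ?thesis using acc by simp
    qed
    have sel: "(\<integral>w. posp (p g w - K g) * \<delta> g w \<partial>M) - q g * D g \<le> 0" if "g \<in> G" for g
    proof -
      have acc: "(\<integral>w. pr g w + q g * D g - posp (p g w - K g) * D g \<partial>M) \<ge> (\<integral>w. pr g w \<partial>M)"
        using F that unfolding feasible_def acc_seller_def by auto
      have "(\<integral>w. pr g w + q g * D g - posp (p g w - K g) * D g \<partial>M)
          = (\<integral>w. pr g w \<partial>M) + q g * D g - E g * D g"
        using ipr[of g] ipp[of g] that unfolding E_def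
        by (simp add: P.prob_space)
      hence 1: "E g * D g \<le> q g * D g" using acc by simp
      have "(\<integral>w. posp (p g w - K g) * \<delta> g w \<partial>M) \<le> (\<integral>w. posp (p g w - K g) * D g \<partial>M)"
        using ippd[OF that] ipp[of g] that dbd[OF that] posp_ge0
        by (intro integral_mono) (auto intro!: mult_left_mono)
      also have "\<dots> = E g * D g" unfolding E_def by simp
      finally show ?thesis using 1 by simp
    qed
    have "(\<integral>w. MS G R p q K D \<delta> w \<partial>M) =
        (\<Sum>r\<in>R. q r * D r) - (\<Sum>g\<in>G. q g * D g) - (\<Sum>r\<in>R. E r * D r)
        + (\<Sum>g\<in>G. (\<integral>w. posp (p g w - K g) * \<delta> g w \<partial>M))"
    proof -
      have i1: "integrable M (\<lambda>w. \<Sum>r\<in>R. posp (p r w - K r) * D r)"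
        by (rule Bochner_Integration.integrable_sum) (use ipp in auto)
      have i2: "integrable M (\<lambda>w. \<Sum>g\<in>G. posp (p g w - K g) * \<delta> g w)"
        by (rule Bochner_Integration.integrable_sum) (use ippd in auto)
      have e1: "(\<integral>w. (\<Sum>r\<in>R. posp (p r w - K r) * D r) \<partial>M) = (\<Sum>r\<in>R. E r * D r)"
        unfolding E_def by (subst Bochner_Integration.integral_sum) (use ipp in auto)
      have e2: "(\<integral>w. (\<Sum>g\<in>G. posp (p g w - K g) * \<delta> g w) \<partial>M)
           = (\<Sum>g\<in>G. (\<integral>w. posp (p g w - K g) * \<delta> g w \<partial>M))"
        by (subst Bochner_Integration.integral_sum) (use ippd in auto)
      show ?thesis unfolding MS_def
        using i1 i2 e1 e2 by (simp add: P.prob_space)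
    qed
    also have "\<dots> = (\<Sum>r\<in>R. q r * D r - E r * D r)
        + (\<Sum>g\<in>G. (\<integral>w. posp (p g w - K g) * \<delta> g w \<partial>M) - q g * D g)"
      by (simp add: sum_subtractf)
    also have "\<dots> \<le> 0"
    proof -
      have "(\<Sum>r\<in>R. q r * D r - E r * D r) \<le> 0" by (rule sum_nonpos) (rule buy)
      moreover have "(\<Sum>g\<in>G. (\<integral>w. posp (p g w - K g) * \<delta> g w \<partial>M) - q g * D g) \<le> 0"
        by (rule sum_nonpos) (rule sel)
      ultimately show ?thesis by linarith
    qed
    finally show "(\<integral>w. MS G R p q K D \<delta> w \<partial>M) \<le> 0" .
  qed
qed

end
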